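(* Let $\psi \colon \operatorname{NOp}_{\alpha}(r, d) \to F(r, d + r)$ be the map sending $L$ to $F_{\alpha}(L, d + r)$. Then $\psi$ is surjective and all fibers have the same dimension.
   Context: Let $\bar C$ be an algebraically closed field of characteristic zero, $\alpha\in\bar C$, and $\partial x = x\partial+1$. $\operatorname{NOp}_\alpha(r,d)$ denotes the set of differential operators $L\in\bar C[x-\alpha][\partial]$ of order exactly $r$ and degree at most $d$ whose leading coefficient $\operatorname{lc}_\partial(L)$ does not vanish at $\alpha$. For such $L$ and $d_1\ge r$, the fundamental matrix $F_\alpha(L,d_1)$ is the $r\times(d_1+1)$ matrix whose first $r$ columns form the identity matrix $I_r$ and each of whose rows consists of the first $d_1+1$ coefficients (in powers of $x-\alpha$) of a power series solution of $L$ at $x=\alpha$. $F(r,d)$ denotes the space of all possible fundamental matrices of degree $d$ for operators of order $r$; it is isomorphic to $\mathbb{A}^{r(d+1-r)}$. *)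

theory Defs
  imports "HOL-Computational_Algebra.Computational_Algebra"
begin

text \<open>An operator L = sum_{i=0}^r p_i(x) D^i is represented by its coefficient
 function L :: nat => 'a poly (L i = p_i, a polynomial in x). Its action on a
 power series in t = x - alpha (expansion at alpha) is obtained by re-expanding
 p_i at alpha, i.e. p_i(alpha + t); D = d/dx = d/dt.\<close>

definition op_apply :: "'a::field_char_0 \<Rightarrow> nat \<Rightarrow> (nat \<Rightarrow> 'a poly) \<Rightarrow> 'a fps \<Rightarrow> 'a fps" where
  "op_apply \<alpha> r L y = (\<Sum>i\<le>r. fps_of_poly (pcompose (L i) [:\<alpha>, 1:]) * (fps_deriv ^^ i) y)"

definition NOp :: "'a::field_char_0 \<Rightarrow> nat \<Rightarrow> nat \<Rightarrow> (nat \<Rightarrow> 'a poly) set" where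
  "NOp \<alpha> r d = {L. (\<forall>i>r. L i = 0) \<and> L r \<noteq> 0 \<and> (\<forall>i\<le>r. degree (L i) \<le> d)
                   \<and> poly (L r) \<alpha> \<noteq> 0}"

text \<open>Fundamental matrix F_alpha(L,d1) as an r x (d1+1) matrix (entries outside
 this range are 0): row i holds the first d1+1 coefficients of the power series
 solution whose first r coefficients are the i-th unit vector.\<close>

definition Fmat :: "'a::field_char_0 \<Rightarrow> nat \<Rightarrow> (nat \<Rightarrow> 'a poly) \<Rightarrow> nat \<Rightarrow> nat \<Rightarrow> nat \<Rightarrow> 'a" where
  "Fmat \<alpha> r L d1 = (\<lambda>i j. if i < r \<and> j \<le> d1 then
      (THE y. op_apply \<alpha> r L y = 0 \<and> (\<forall>k<r. fps_nth y k = (if k = i then 1 else 0))) $ j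
    else 0)"

definition Fspace :: "nat \<Rightarrow> nat \<Rightarrow> (nat \<Rightarrow> nat \<Rightarrow> 'a::field_char_0) set" where
  "Fspace r d1 = {M. (\<forall>i<r. \<forall>j<r. M i j = (if i = j then 1 else 0))
                    \<and> (\<forall>i j. \<not> (i < r \<and> j \<le> d1) \<longrightarrow> M i j = 0)}"

inductive polyfun_in :: "'c set \<Rightarrow> (('c \<Rightarrow> 'a::comm_ring_1) \<Rightarrow> 'a) \<Rightarrow> bool" for I where
  const: "polyfun_in I (\<lambda>_. c)"
| var: "i \<in> I \<Longrightarrow> polyfun_in I (\<lambda>v. v i)"
| add: "polyfun_in I P \<Longrightarrow> polyfun_in I Q \<Longrightarrow> polyfun_in I (\<lambda>v. P v + Q v)"
| mult: "polyfun_in I P \<Longrightarrow> polyfun_in I Q \<Longrightarrow> polyfun_in I (\<lambda>v. P v * Q v)"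

definition alg_indep_on :: "('c \<Rightarrow> 'a::comm_ring_1) set \<Rightarrow> 'c set \<Rightarrow> bool" where
  "alg_indep_on S I \<longleftrightarrow> (\<forall>P. polyfun_in I P \<longrightarrow> (\<forall>v\<in>S. P v = 0) \<longrightarrow> (\<forall>v. P v = 0))"

text \<open>Dimension = transcendence degree of the coordinate ring of the Zariski
 closure = maximal number of algebraically independent coordinate functions.\<close>

definition alg_dim :: "('c \<Rightarrow> 'a::comm_ring_1) set \<Rightarrow> nat" where
  "alg_dim S = (GREATEST n. \<exists>I. finite I \<and> card I = n \<and> alg_indep_on S I)"

definition op_coords :: "(nat \<Rightarrow> 'a::zero poly) \<Rightarrow> nat \<times> nat \<Rightarrow> 'a" where
  "op_coords L = (\<lambda>(i, j). coeff (L i) j)"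

end

theory Submission
  imports Defs
begin



definition Eop :: "nat \<Rightarrow> (nat \<Rightarrow> nat \<Rightarrow> 'a::field_char_0) \<Rightarrow> (nat \<Rightarrow> 'a) \<Rightarrow> nat \<Rightarrow> 'a" where
  "Eop r w y n = (\<Sum>j\<le>r. \<Sum>k\<le>n. w j k * pochhammer (of_nat (n - k + 1)) j * y (n - k + j))"

lemma deriv_iter_nth:
  "(fps_deriv ^^ j) Y $ m = pochhammer (of_nat (m+1)) j * Y $ (m + j)"
proof (induction j arbitrary: m)
  case 0
  then show ?case by simp
next
  case (Suc j)
  have "(fps_deriv ^^ Suc j) Y $ m = of_nat (m+1) * ((fps_deriv ^^ j) Y $ (m+1))"
    by (simp add: fps_deriv_nth)
  also have "\<dots> = of_nat (m+1) * (pochhammer (of_nat (m+1+1)) j * Y $ (m + 1 + j))"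
    using Suc by simp
  also have "\<dots> = pochhammer (of_nat (m+1)) (Suc j) * Y $ (m + Suc j)"
    by (simp add: pochhammer_rec algebra_simps)
  finally show ?case .
qed

lemma op_apply_nth:
  "op_apply \<alpha> r L Y $ n = Eop r (\<lambda>j k. coeff (L j \<circ>\<^sub>p [:\<alpha>, 1:]) k) (($) Y) n"
  unfolding op_apply_def Eop_def fps_sum_nth fps_mult_nth atLeast0AtMost fps_of_poly_nth
    deriv_iter_nth
  by (simp add: mult.assoc)

lemma Eop_local:
  assumes "\<And>m. m \<le> n + r \<Longrightarrow> y m = y' m"
  shows "Eop r w y n = Eop r w y' n"
  unfolding Eop_def using assms by (intro sum.cong refl) auto

lemma Eop_split:
  "Eop r w y n = Eop r w (y(n+r:=0)) n + w r 0 * pochhammer (of_nat (n+1)) r * y (n+r)"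
proof -
  have "Eop r w y n = (\<Sum>j\<le>r. \<Sum>k\<le>n. w j k * pochhammer (of_nat (n - k + 1)) j * (y(n+r:=0)) (n - k + j)
      + (if j = r then (if k = 0 then w r 0 * pochhammer (of_nat (n+1)) r * y (n+r) else 0) else 0))"
    unfolding Eop_def
  proof (intro sum.cong refl)
    fix j k assume "j \<in> {..r}" "k \<in> {..n}"
    then have jk: "j \<le> r" "k \<le> n" by auto
    show "w j k * pochhammer (of_nat (n - k + 1)) j * y (n - k + j) =
         w j k * pochhammer (of_nat (n - k + 1)) j * (y(n + r := 0)) (n - k + j) +
         (if j = r then if k = 0 then w r 0 * pochhammer (of_nat (n + 1)) r * y (n + r) else 0 else 0)"
    proof (cases "j = r \<and> k = 0")
      case True then show ?thesis by simp
    next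
      case False
      then have "n - k + j \<noteq> n + r" using jk by auto
      then show ?thesis using False by auto
    qed
  qed
  also have "\<dots> = Eop r w (y(n+r:=0)) n + (\<Sum>j\<le>r. \<Sum>k\<le>n. (if j = r then (if k = 0 then w r 0 * pochhammer (of_nat (n+1)) r * y (n+r) else 0) else 0))"
    unfolding Eop_def by (simp only: sum.distrib)
  also have "(\<Sum>j\<le>r. \<Sum>k\<le>n. (if j = r then (if k = 0 then w r 0 * pochhammer (of_nat (n+1)) r * y (n+r) else 0) else 0))
     = w r 0 * pochhammer (of_nat (n+1)) r * y (n+r)"
    by (subst sum.swap) simp
  finally show ?thesis .
qed

lemma poch_nz: "pochhammer (of_nat (n+1) :: 'a::field_char_0) r \<noteq> 0"
proof
  assume "pochhammer (of_nat (n+1) :: 'a) r = 0"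
  then obtain k where "(of_nat (n+1) :: 'a) = - of_nat k" by (auto simp: pochhammer_eq_0_iff)
  then have "(of_nat (n+1) :: 'a) + of_nat k = 0" by (simp add: eq_neg_iff_add_eq_0)
  then have "(of_nat (n+1+k) :: 'a) = 0" by (simp only: of_nat_add)
  then show False by (simp only: of_nat_eq_0_iff)
qed

lemma Eop_diff_w: "Eop r (\<lambda>j k. u j k - v j k) y n = Eop r u y n - Eop r v y n"
  unfolding Eop_def by (simp add: algebra_simps sum_subtractf)

lemma Eop_lincomb:
  "Eop r (\<lambda>j k. \<Sum>l\<in>K. c l * b l j k) y n = (\<Sum>l\<in>K. c l * Eop r (b l) y n)"
proof -
  have "Eop r (\<lambda>j k. \<Sum>l\<in>K. c l * b l j k) y n =
     (\<Sum>j\<le>r. \<Sum>k\<le>n. \<Sum>l\<in>K. c l * (b l j k * pochhammer (of_nat (n - k + 1)) j * y (n - k + j)))"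
    unfolding Eop_def by (simp add: sum_distrib_right mult.assoc)
  also have "\<dots> = (\<Sum>l\<in>K. \<Sum>j\<le>r. \<Sum>k\<le>n. c l * (b l j k * pochhammer (of_nat (n - k + 1)) j * y (n - k + j)))"
    by (subst sum.swap, subst (2) sum.swap, rule refl)
  also have "\<dots> = (\<Sum>l\<in>K. c l * Eop r (b l) y n)"
    unfolding Eop_def by (simp add: sum_distrib_left)
  finally show ?thesis .
qed

lemma Eop_col:
  assumes "\<And>j k. k < n \<Longrightarrow> u j k = 0"
  shows "Eop r u y n = (\<Sum>j\<le>r. u j n * fact j * y j)"
  unfolding Eop_def
proof (intro sum.cong refl)
  fix j
  have "{..n} = insert n {..<n}" by auto
  then have "(\<Sum>k\<le>n. u j k * pochhammer (of_nat (n - k + 1)) j * y (n - k + j)) =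
      u j n * pochhammer (of_nat (n - n + 1)) j * y (n - n + j)
      + (\<Sum>k<n. u j k * pochhammer (of_nat (n - k + 1)) j * y (n - k + j))"
    by simp
  also have "\<dots> = u j n * fact j * y j" using assms by (simp add: pochhammer_fact)
  finally show "(\<Sum>k\<le>n. u j k * pochhammer (of_nat (n - k + 1)) j * y (n - k + j)) = u j n * fact j * y j" .
qed

primrec approx :: "(nat \<Rightarrow> (nat \<Rightarrow> 'b) \<Rightarrow> 'b) \<Rightarrow> nat \<Rightarrow> nat \<Rightarrow> 'b" where
  "approx F 0 = (\<lambda>_. undefined)"
| "approx F (Suc k) = (\<lambda>m. F m (approx F k))"

lemma approx_stab:
  fixes F :: "nat \<Rightarrow> (nat \<Rightarrow> 'b) \<Rightarrow> 'b"
  assumes resp: "\<And>n y y'. (\<And>m. m < n \<Longrightarrow> y m = y' m) \<Longrightarrow> F n y = F n y'"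
  shows "m < k \<Longrightarrow> approx F k m = approx F (Suc m) m"
proof (induction k arbitrary: m rule: less_induct)
  case (less k)
  then obtain k0 where k0: "k = Suc k0" by (cases k) auto
  have "approx F k0 j = approx F m j" if "j < m" for j
  proof -
    have "approx F k0 j = approx F (Suc j) j" using less.IH[of k0 j] k0 that less.prems by auto
    moreover have "approx F m j = approx F (Suc j) j" using less.IH[of m j] that less.prems by auto
    ultimately show ?thesis by simp
  qed
  then have "F m (approx F k0) = F m (approx F m)" by (rule resp)
  then show ?case using k0 by simp
qed

lemma rec_exists:
  fixes F :: "nat \<Rightarrow> (nat \<Rightarrow> 'b) \<Rightarrow> 'b"
  assumes resp: "\<And>n y y'. (\<And>m. m < n \<Longrightarrow> y m = y' m) \<Longrightarrow> F n y = F n y'"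
  shows "\<exists>y. \<forall>n. y n = F n y"
proof -
  define y where "y m = approx F (Suc m) m" for m
  have "y n = F n y" for n
  proof -
    have "approx F n j = y j" if "j < n" for j
      using approx_stab[OF resp that] unfolding y_def by simp
    then have "F n (approx F n) = F n y" by (rule resp)
    then show ?thesis unfolding y_def by simp
  qed
  then show ?thesis by blast
qed




lemma seq_sol:
  fixes w :: "nat \<Rightarrow> nat \<Rightarrow> 'a::field_char_0"
  assumes c: "w r 0 \<noteq> 0"
  shows "\<exists>y. (\<forall>n. Eop r w y n = 0) \<and> (\<forall>m<r. y m = init m)"
proof -
  define F where "F m y = (if m < r then init m else
     - Eop r w (y(m:=0)) (m - r) / (w r 0 * pochhammer (of_nat (m - r + 1)) r))" for m and y :: "nat \<Rightarrow> 'a"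
  have resp: "F n y = F n y'" if "\<And>m. m < n \<Longrightarrow> y m = y' m" for n y y'
  proof (cases "n < r")
    case False
    have "Eop r w (y(n:=0)) (n - r) = Eop r w (y'(n:=0)) (n - r)"
      by (rule Eop_local) (use that False in auto)
    then show ?thesis unfolding F_def by simp
  qed (simp add: F_def)
  obtain y where y: "\<And>n. y n = F n y" using rec_exists[of F, OF resp] by blast
  have "Eop r w y n = 0" for n
  proof -
    have nz: "w r 0 * pochhammer (of_nat (n+1)) r \<noteq> 0" using c poch_nz by simp
    have "y (n+r) = - Eop r w (y(n+r:=0)) n / (w r 0 * pochhammer (of_nat (n+1)) r)"
      using y[of "n+r"] by (simp add: F_def)
    then show ?thesis using Eop_split[of r w y n] nz by simp
  qed
  moreover have "\<forall>m<r. y m = init m" using y by (simp add: F_def)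
  ultimately show ?thesis by blast
qed

lemma seq_match:
  fixes w :: "nat \<Rightarrow> nat \<Rightarrow> 'a::field_char_0"
  assumes c: "w r 0 \<noteq> 0"
    and ey: "\<And>n. n \<le> D \<Longrightarrow> Eop r w y n = 0"
    and ez: "\<And>n. n \<le> D \<Longrightarrow> Eop r w z n = 0"
    and init: "\<And>m. m < r \<Longrightarrow> y m = z m"
  shows "m \<le> D + r \<Longrightarrow> y m = z m"
proof (induction m rule: less_induct)
  case (less m)
  show ?case
  proof (cases "m < r")
    case True then show ?thesis by (rule init)
  next
    case False
    define n where "n = m - r"
    have m: "m = n + r" "n \<le> D" using False less.prems by (auto simp: n_def)
    have "Eop r w (y(m:=0)) n = Eop r w (z(m:=0)) n"
      by (rule Eop_local) (use less.IH m in auto)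
    moreover have "Eop r w y n = Eop r w (y(m:=0)) n + w r 0 * pochhammer (of_nat (n+1)) r * y m"
      using Eop_split[of r w y n] m by simp
    moreover have "Eop r w z n = Eop r w (z(m:=0)) n + w r 0 * pochhammer (of_nat (n+1)) r * z m"
      using Eop_split[of r w z n] m by simp
    moreover have nz: "w r 0 * pochhammer (of_nat (n+1)) r \<noteq> 0" using c poch_nz by simp
    ultimately have "w r 0 * pochhammer (of_nat (n+1)) r * y m = w r 0 * pochhammer (of_nat (n+1)) r * z m"
      using ey[OF m(2)] ez[OF m(2)] by (metis add_left_cancel)
    then show ?thesis using nz by simp
  qed
qed

definition Qw :: "'a::field_char_0 \<Rightarrow> (nat \<Rightarrow> 'a poly) \<Rightarrow> nat \<Rightarrow> nat \<Rightarrow> 'a" where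
  "Qw \<alpha> L = (\<lambda>j k. coeff (L j \<circ>\<^sub>p [:\<alpha>, 1:]) k)"

lemma Qw_r0: "Qw \<alpha> L r 0 = poly (L r) \<alpha>"
  by (simp add: Qw_def poly_0_coeff_0[symmetric] poly_pcompose)

lemma nth_Abs_fps_fun[simp]: "($) (Abs_fps y) = y"
  by (rule ext) simp

lemma THE_sol:
  fixes \<alpha> :: "'a::field_char_0" and i :: nat
  assumes c: "poly (L r) \<alpha> \<noteq> 0"
  defines "Y \<equiv> THE Y. op_apply \<alpha> r L Y = 0 \<and> (\<forall>k<r. Y $ k = (if k = i then 1 else 0))"
  shows "(\<forall>n. Eop r (Qw \<alpha> L) (($) Y) n = 0) \<and> (\<forall>k<r. Y $ k = (if k = i then 1 else 0))"
proof -
  let ?P = "\<lambda>Y. op_apply \<alpha> r L Y = 0 \<and> (\<forall>k<r. Y $ k = (if k = i then 1 else 0))"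
  have c': "Qw \<alpha> L r 0 \<noteq> 0" using c Qw_r0 by metis
  have eq: "?P Y \<longleftrightarrow> (\<forall>n. Eop r (Qw \<alpha> L) (($) Y) n = 0) \<and> (\<forall>k<r. Y $ k = (if k = i then 1 else 0))" for Y
    by (simp add: fps_eq_iff op_apply_nth Qw_def)
  obtain y where y: "\<forall>n. Eop r (Qw \<alpha> L) y n = 0" "\<forall>m<r. y m = (if m = i then 1 else 0)"
    using seq_sol[where w="Qw \<alpha> L" and r=r, OF c', of "\<lambda>m. if m = i then 1 else 0"] by blast
  have "\<exists>!Y. ?P Y"
  proof (rule ex_ex1I)
    have "op_apply \<alpha> r L (Abs_fps y) = 0" using y(1) unfolding fps_eq_iff op_apply_nth Qw_def by simp
    then show "\<exists>Y. ?P Y" using y by (intro exI[of _ "Abs_fps y"]) simp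
  next
    fix Y1 Y2 assume "?P Y1" "?P Y2"
    then have h: "\<forall>n. Eop r (Qw \<alpha> L) (($) Y1) n = 0" "\<forall>k<r. Y1 $ k = (if k = i then 1 else 0)"
      "\<forall>n. Eop r (Qw \<alpha> L) (($) Y2) n = 0" "\<forall>k<r. Y2 $ k = (if k = i then 1 else 0)"
      by (auto simp: eq)
    have "Y1 $ m = Y2 $ m" for m
      using seq_match[where w="Qw \<alpha> L" and r=r and D=m and y="($) Y1" and z="($) Y2" and m=m, OF c'] h by auto
    then show "Y1 = Y2" by (simp add: fps_eq_iff)
  qed
  from theI'[OF this] show ?thesis unfolding Y_def eq .
qed

lemma Fmat_in_Fspace:
  fixes \<alpha> :: "'a::field_char_0"
  assumes "L \<in> NOp \<alpha> r d" "r \<le> D"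
  shows "Fmat \<alpha> r L D \<in> Fspace r D"
proof -
  have c: "poly (L r) \<alpha> \<noteq> 0" using assms by (simp add: NOp_def)
  show ?thesis unfolding Fspace_def Fmat_def
    using THE_sol[where L=L and r=r and \<alpha>=\<alpha>, OF c] assms(2) by auto
qed

lemma Fmat_fiber:
  fixes \<alpha> :: "'a::field_char_0"
  assumes L: "L \<in> NOp \<alpha> r d" and M: "M \<in> Fspace r (d + r)"
  shows "Fmat \<alpha> r L (d + r) = M \<longleftrightarrow> (\<forall>i<r. \<forall>n\<le>d. Eop r (Qw \<alpha> L) (M i) n = 0)"
proof -
  have c: "poly (L r) \<alpha> \<noteq> 0" using L by (simp add: NOp_def)
  have c': "Qw \<alpha> L r 0 \<noteq> 0" using c Qw_r0 by metis
  define Y where "Y i = (THE Y. op_apply \<alpha> r L Y = 0 \<and> (\<forall>k<r. Y $ k = (if k = i then 1 else 0)))" for i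
  have Ysol: "\<forall>n. Eop r (Qw \<alpha> L) (($) (Y i)) n = 0" "\<forall>k<r. Y i $ k = (if k = i then 1 else 0)" for i
    using THE_sol[where L=L and r=r and \<alpha>=\<alpha> and i=i, OF c] unfolding Y_def by auto
  have F: "Fmat \<alpha> r L (d + r) = (\<lambda>i j. if i < r \<and> j \<le> d + r then Y i $ j else 0)"
    unfolding Fmat_def Y_def by simp
  have Mid: "M i j = (if i = j then 1 else 0)" if "i < r" "j < r" for i j
    using M that by (simp add: Fspace_def)
  have Mout: "M i j = 0" if "\<not> (i < r \<and> j \<le> d + r)" for i j
    using M that by (simp add: Fspace_def)
  show ?thesis
  proof
    assume FM: "Fmat \<alpha> r L (d + r) = M"
    show "\<forall>i<r. \<forall>n\<le>d. Eop r (Qw \<alpha> L) (M i) n = 0"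
    proof (intro allI impI)
      fix i n assume i: "i < r" and n: "n \<le> d"
      have "M i m = Y i $ m" if "m \<le> n + r" for m
        using FM[symmetric] i n that by (auto simp: F dest: fun_cong[where x = m] fun_cong[where x = i])
      then have "Eop r (Qw \<alpha> L) (M i) n = Eop r (Qw \<alpha> L) (($) (Y i)) n"
        by (intro Eop_local) auto
      then show "Eop r (Qw \<alpha> L) (M i) n = 0" using Ysol by simp
    qed
  next
    assume E: "\<forall>i<r. \<forall>n\<le>d. Eop r (Qw \<alpha> L) (M i) n = 0"
    show "Fmat \<alpha> r L (d + r) = M"
    proof (intro ext)
      fix i j
      show "Fmat \<alpha> r L (d + r) i j = M i j"
      proof (cases "i < r \<and> j \<le> d + r")
        case True
        have "Y i $ j = M i j"
          by (rule seq_match[where w="Qw \<alpha> L" and r=r and D=d and y="($) (Y i)" and z="M i" and m=j, OF c']) (use Ysol E True Mid in auto)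
        then show ?thesis using True F by simp
      next
        case False then show ?thesis by (auto simp add: F Mout)
      qed
    qed
  qed
qed




definition satw :: "nat \<Rightarrow> nat \<Rightarrow> (nat \<Rightarrow> nat \<Rightarrow> 'a) \<Rightarrow> (nat \<Rightarrow> nat \<Rightarrow> 'a::field_char_0) \<Rightarrow> bool" where
  "satw r d M w \<longleftrightarrow> (\<forall>j k. (r < j \<or> d < k) \<longrightarrow> w j k = 0) \<and> (\<forall>i<r. \<forall>n\<le>d. Eop r w (M i) n = 0)"

lemma sum_col_delta:
  fixes u :: "nat \<Rightarrow> nat \<Rightarrow> 'a::field_char_0"
  assumes "i < r" "u r n = 0" "\<And>j. j < r \<Longrightarrow> M i j = (if i = j then 1 else 0)"
  shows "(\<Sum>j\<le>r. u j n * fact j * M i j) = u i n * fact i"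
proof -
  have "{..r} = insert r {..<r}" by auto
  then have "(\<Sum>j\<le>r. u j n * fact j * M i j) = u r n * fact r * M i r + (\<Sum>j<r. u j n * fact j * M i j)"
    by simp
  also have "(\<Sum>j<r. u j n * fact j * M i j) = (\<Sum>j<r. if j = i then u i n * fact i else 0)"
    by (intro sum.cong) (auto simp: assms(3))
  also have "\<dots> = u i n * fact i" using assms(1) by simp
  finally show ?thesis using assms(2) by simp
qed

lemma satw_unique:
  fixes w :: "nat \<Rightarrow> nat \<Rightarrow> 'a::field_char_0"
  assumes M: "\<And>i j. i < r \<Longrightarrow> j < r \<Longrightarrow> M i j = (if i = j then 1 else 0)"
    and w: "satw r d M w" and w': "satw r d M w'" and row: "\<And>k. w r k = w' r k"
  shows "w = w'"
proof -
  define u where "u j k = w j k - w' j k" for j k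
  have "\<forall>j. u j n = 0" for n
  proof (induction n rule: less_induct)
    case (less n)
    show ?case
    proof
      fix j
      show "u j n = 0"
      proof (cases "r < j \<or> d < n")
        case True then show ?thesis using w w' by (auto simp: satw_def u_def)
      next
        case False
        show ?thesis
        proof (cases "j = r")
          case True then show ?thesis using row by (simp add: u_def)
        next
          case False2: False
          with False have jn: "j < r" "n \<le> d" by auto
          have "Eop r u (M j) n = 0"
            using Eop_diff_w[of r w w' "M j" n] w w' jn unfolding u_def[abs_def] satw_def by simp
          moreover have "Eop r u (M j) n = (\<Sum>j'\<le>r. u j' n * fact j' * M j j')"
            by (rule Eop_col) (use less in auto)
          moreover have "(\<Sum>j'\<le>r. u j' n * fact j' * M j j') = u j n * fact j"
            by (rule sum_col_delta) (use jn row M in \<open>auto simp: u_def\<close>)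
          ultimately show ?thesis by simp
        qed
      qed
    qed
  qed
  then show ?thesis by (auto simp: u_def fun_eq_iff)
qed

lemma satw_exists:
  fixes c :: "nat \<Rightarrow> 'a::field_char_0"
  assumes M: "\<And>i j. i < r \<Longrightarrow> j < r \<Longrightarrow> M i j = (if i = j then 1 else 0)"
    and c: "\<And>k. d < k \<Longrightarrow> c k = 0"
  shows "\<exists>w. satw r d M w \<and> (\<forall>k. w r k = c k)"
proof -
  define w0 where "w0 col n = (\<lambda>j k. if k < n then col k j else if k = n \<and> j = r then c n else 0)"
    for col :: "nat \<Rightarrow> nat \<Rightarrow> 'a" and n
  define F where "F n col = (\<lambda>i. if n \<le> d then (if i = r then c n else if i < r then
      - Eop r (w0 col n) (M i) n / fact i else 0) else 0)" for n col
  have resp: "F n col = F n col'" if "\<And>m. m < n \<Longrightarrow> col m = col' m" for n col col'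
  proof -
    have e: "w0 col n = w0 col' n" using that by (auto simp: w0_def fun_eq_iff)
    show ?thesis unfolding F_def by (simp only: e)
  qed
  obtain col where col: "\<And>n. col n = F n col" using rec_exists[of F, OF resp] by blast
  define w where "w j k = col k j" for j k
  have wcol: "w j k = F k col j" for j k using col unfolding w_def by metis
  have supp: "\<forall>j k. (r < j \<or> d < k) \<longrightarrow> w j k = 0" by (auto simp: wcol F_def)
  have rowr: "\<forall>k. w r k = c k" using c by (auto simp: wcol F_def)
  have "Eop r w (M i) n = 0" if i: "i < r" and n: "n \<le> d" for i n
  proof -
    define u where "u j k = w j k - w0 col n j k" for j k
    have "Eop r u (M i) n = Eop r w (M i) n - Eop r (w0 col n) (M i) n"
      unfolding u_def[abs_def] by (rule Eop_diff_w)
    moreover have "Eop r u (M i) n = (\<Sum>j\<le>r. u j n * fact j * M i j)"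
      by (rule Eop_col) (simp add: u_def w0_def w_def)
    moreover have "(\<Sum>j\<le>r. u j n * fact j * M i j) = u i n * fact i"
      by (rule sum_col_delta) (use i n rowr M in \<open>auto simp: u_def w0_def\<close>)
    moreover have "u i n = - Eop r (w0 col n) (M i) n / fact i"
      using i n by (simp add: u_def wcol F_def w0_def)
    ultimately show ?thesis by simp
  qed
  then show ?thesis using supp rowr unfolding satw_def by blast
qed

lemma satw_lincomb:
  fixes b :: "'l \<Rightarrow> nat \<Rightarrow> nat \<Rightarrow> 'a::field_char_0"
  assumes "\<And>l. l \<in> K \<Longrightarrow> satw r d M (b l)"
  shows "satw r d M (\<lambda>j k. \<Sum>l\<in>K. c l * b l j k)"
  using assms unfolding satw_def Eop_lincomb by auto

lemma satw_span:
  fixes M :: "nat \<Rightarrow> nat \<Rightarrow> 'a::field_char_0"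
  assumes M: "\<And>i j. i < r \<Longrightarrow> j < r \<Longrightarrow> M i j = (if i = j then 1 else 0)"
  obtains \<beta> where "\<And>w. satw r d M w \<Longrightarrow> w = (\<lambda>j k. \<Sum>l\<le>d. w r l * \<beta> l j k)"
proof -
  define \<beta> where "\<beta> l = (SOME w. satw r d M w \<and> (\<forall>k. w r k = (if k = l then 1 else 0)))" for l
  have \<beta>: "satw r d M (\<beta> l) \<and> (\<forall>k. \<beta> l r k = (if k = l then 1 else 0))" if "l \<le> d" for l
  proof -
    have ex: "\<exists>w. satw r d M w \<and> (\<forall>k. w r k = (if k = l then 1 else 0))"
      by (rule satw_exists[OF M]) (use that in auto)
    show ?thesis using someI_ex[OF ex] unfolding \<beta>_def .
  qed
  have "w = (\<lambda>j k. \<Sum>l\<le>d. w r l * \<beta> l j k)" if w: "satw r d M w" for w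
  proof (rule satw_unique[OF M w])
    show "satw r d M (\<lambda>j k. \<Sum>l\<le>d. w r l * \<beta> l j k)"
      by (rule satw_lincomb) (use \<beta> in auto)
    fix k
    have "(\<Sum>l\<le>d. w r l * \<beta> l r k) = (\<Sum>l\<le>d. if l = k then w r k else 0)"
      by (intro sum.cong) (use \<beta> in auto)
    also have "\<dots> = w r k" using w by (auto simp: satw_def)
    finally show "w r k = (\<Sum>l\<le>d. w r l * \<beta> l r k)" by simp
  qed
  then show ?thesis using that by blast
qed

definition Lof :: "'a::field_char_0 \<Rightarrow> nat \<Rightarrow> (nat \<Rightarrow> nat \<Rightarrow> 'a) \<Rightarrow> nat \<Rightarrow> 'a poly" where
  "Lof \<alpha> d w = (\<lambda>j. (\<Sum>k\<le>d. monom (w j k) k) \<circ>\<^sub>p [:-\<alpha>, 1:])"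

lemma coeff_summonom: "coeff (\<Sum>k\<le>d. monom (a k) k) m = (if m \<le> d then a m else 0)"
  by (simp add: coeff_sum)

lemma degree_summonom: "degree (\<Sum>k\<le>d. monom (a k) k) \<le> d"
  by (rule degree_le) (simp add: coeff_summonom)

lemma shift1: "[:-a,1:] \<circ>\<^sub>p [:a,1:] = [:0,(1::'a::field_char_0):]" by (simp add: pcompose_pCons)
lemma shift2: "[:a,1:] \<circ>\<^sub>p [:-a,1:] = [:0,(1::'a::field_char_0):]" by (simp add: pcompose_pCons)

lemma Qw_Lof:
  assumes "\<And>j k. d < k \<Longrightarrow> w j k = 0"
  shows "Qw \<alpha> (Lof \<alpha> d w) = w"
proof (intro ext)
  fix j k
  have "Qw \<alpha> (Lof \<alpha> d w) j k = coeff ((\<Sum>k\<le>d. monom (w j k) k) \<circ>\<^sub>p ([:-\<alpha>, 1:] \<circ>\<^sub>p [:\<alpha>, 1:])) k"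
    by (simp add: Qw_def Lof_def pcompose_assoc)
  also have "\<dots> = w j k" using assms by (simp add: shift1 pcompose_idR coeff_summonom)
  finally show "Qw \<alpha> (Lof \<alpha> d w) j k = w j k" .
qed

lemma Lof_Qw:
  assumes "\<And>j. degree (L j) \<le> d"
  shows "Lof \<alpha> d (Qw \<alpha> L) = L"
proof (intro ext)
  fix j
  have "(\<Sum>k\<le>d. monom (Qw \<alpha> L j k) k) = L j \<circ>\<^sub>p [:\<alpha>, 1:]"
  proof (rule poly_eqI)
    fix m
    have "degree (L j \<circ>\<^sub>p [:\<alpha>, 1:]) \<le> d" using assms[of j] by (simp add: degree_pcompose)
    then show "coeff (\<Sum>k\<le>d. monom (Qw \<alpha> L j k) k) m = coeff (L j \<circ>\<^sub>p [:\<alpha>, 1:]) m"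
      by (auto simp: coeff_summonom Qw_def coeff_eq_0)
  qed
  then show "Lof \<alpha> d (Qw \<alpha> L) j = L j"
    by (simp add: Lof_def pcompose_assoc[symmetric] shift2 pcompose_idR)
qed

lemma Lof_NOp:
  fixes \<alpha> :: "'a::field_char_0"
  assumes w: "satw r d M w" and c: "w r 0 \<noteq> 0"
  shows "Lof \<alpha> d w \<in> NOp \<alpha> r d"
proof -
  have polyr: "poly (Lof \<alpha> d w r) \<alpha> = w r 0"
    by (simp add: Lof_def poly_pcompose poly_0_coeff_0 coeff_summonom)
  have zero: "Lof \<alpha> d w j = 0" if "r < j" for j
  proof -
    have "(\<Sum>k\<le>d. monom (w j k) k) = 0" using w that by (simp add: satw_def)
    then show ?thesis by (simp add: Lof_def)
  qed
  have deg: "degree (Lof \<alpha> d w j) \<le> d" for j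
    using degree_summonom[where d=d and a="w j"] by (simp add: Lof_def degree_pcompose)
  show ?thesis unfolding NOp_def using polyr zero deg c by auto
qed

lemma NOp_degs: "L \<in> NOp \<alpha> r d \<Longrightarrow> degree (L j) \<le> d"
  by (cases "j \<le> r") (auto simp: NOp_def)

lemma NOp_satw_iff:
  fixes \<alpha> :: "'a::field_char_0"
  assumes L: "L \<in> NOp \<alpha> r d" and M: "M \<in> Fspace r (d + r)"
  shows "Fmat \<alpha> r L (d + r) = M \<longleftrightarrow> satw r d M (Qw \<alpha> L)"
proof -
  have "Qw \<alpha> L j k = 0" if "r < j \<or> d < k" for j k
  proof (cases "r < j")
    case True then show ?thesis using L by (simp add: NOp_def Qw_def)
  next
    case False
    then have "d < k" using that by simp
    moreover have "degree (L j \<circ>\<^sub>p [:\<alpha>, 1:]) \<le> d" using NOp_degs[OF L, of j] by (simp add: degree_pcompose)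
    ultimately show ?thesis by (simp add: Qw_def coeff_eq_0)
  qed
  then show ?thesis using Fmat_fiber[OF L M] unfolding satw_def by auto
qed

lemma Lof_lincomb:
  fixes b :: "'l \<Rightarrow> nat \<Rightarrow> nat \<Rightarrow> 'a::field_char_0"
  assumes "finite K"
  shows "Lof \<alpha> d (\<lambda>j k. \<Sum>l\<in>K. c l * b l j k) j = (\<Sum>l\<in>K. smult (c l) (Lof \<alpha> d (b l) j))"
proof -
  have "(\<Sum>k\<le>d. monom (\<Sum>l\<in>K. c l * b l j k) k) = (\<Sum>l\<in>K. smult (c l) (\<Sum>k\<le>d. monom (b l j k) k))"
  proof (rule poly_eqI)
    fix m show "coeff (\<Sum>k\<le>d. monom (\<Sum>l\<in>K. c l * b l j k) k) m = coeff (\<Sum>l\<in>K. smult (c l) (\<Sum>k\<le>d. monom (b l j k) k)) m"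
      by (simp add: coeff_summonom coeff_sum)
  qed
  then show ?thesis unfolding Lof_def by (simp only: pcompose_sum pcompose_smult)
qed




lemma polyfun_agree:
  assumes "polyfun_in I P" "\<And>i. i \<in> I \<Longrightarrow> v i = v' i"
  shows "P v = P v'"
  using assms by (induction rule: polyfun_in.induct) auto

lemma polyfun_line:
  fixes P :: "('c \<Rightarrow> 'a::field) \<Rightarrow> 'a"
  assumes "polyfun_in I P"
  shows "\<exists>p. \<forall>t. P (\<lambda>x. v x + t * e x) = poly p t"
  using assms
proof (induction rule: polyfun_in.induct)
  case (const c)
  show ?case by (rule exI[of _ "[:c:]"]) simp
next
  case (var i)
  show ?case by (rule exI[of _ "[:v i, e i:]"]) (simp add: algebra_simps)
next
  case (add P Q)
  then obtain p q where "\<forall>t. P (\<lambda>x. v x + t * e x) = poly p t" "\<forall>t. Q (\<lambda>x. v x + t * e x) = poly q t" by blast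
  then show ?case by (intro exI[of _ "p + q"]) simp
next
  case (mult P Q)
  then obtain p q where "\<forall>t. P (\<lambda>x. v x + t * e x) = poly p t" "\<forall>t. Q (\<lambda>x. v x + t * e x) = poly q t" by blast
  then show ?case by (intro exI[of _ "p * q"]) simp
qed

lemma polyfun_lin:
  fixes a :: "'c \<Rightarrow> 'a::comm_ring_1"
  assumes "finite F" "F \<subseteq> I"
  shows "polyfun_in I (\<lambda>v. \<Sum>i\<in>F. a i * v i)"
  using assms
proof (induction F rule: finite_induct)
  case empty
  show ?case using polyfun_in.const[of I 0] by simp
next
  case (insert x F)
  have "polyfun_in I (\<lambda>v. a x * v x + (\<Sum>i\<in>F. a i * v i))"
    by (intro polyfun_in.add polyfun_in.mult polyfun_in.const polyfun_in.var) (use insert in auto)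
  then show ?case using insert by simp
qed

lemma lin_dep:
  fixes f :: "'c \<Rightarrow> nat \<Rightarrow> 'a::field"
  assumes "finite I" "N < card I"
  shows "\<exists>a. (\<exists>i\<in>I. a i \<noteq> 0) \<and> (\<forall>l<N. (\<Sum>i\<in>I. a i * f i l) = 0)"
  using assms
proof (induction N arbitrary: I f)
  case 0
  then obtain i0 where i0: "i0 \<in> I" by (metis card.empty ex_in_conv less_irrefl)
  show ?case by (rule exI[of _ "\<lambda>i. if i = i0 then 1 else 0"]) (use i0 in auto)
next
  case (Suc N)
  show ?case
  proof (cases "\<forall>i\<in>I. f i N = 0")
    case True
    obtain a where a: "\<exists>i\<in>I. a i \<noteq> 0" "\<forall>l<N. (\<Sum>i\<in>I. a i * f i l) = 0"
      using Suc.IH[of I f] Suc.prems by auto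
    have "\<forall>l<Suc N. (\<Sum>i\<in>I. a i * f i l) = 0"
      using a(2) True by (auto simp: less_Suc_eq)
    then show ?thesis using a(1) by blast
  next
    case False
    then obtain i0 where i0: "i0 \<in> I" "f i0 N \<noteq> 0" by blast
    define I' where "I' = I - {i0}"
    define g where "g i l = f i l - f i N / f i0 N * f i0 l" for i l
    have fin: "finite I'" using Suc.prems by (simp add: I'_def)
    have card: "N < card I'" using Suc.prems i0 by (simp add: I'_def)
    obtain a' where a': "\<exists>i\<in>I'. a' i \<noteq> 0" "\<forall>l<N. (\<Sum>i\<in>I'. a' i * g i l) = 0"
      using Suc.IH[OF fin card, of g] by blast
    define a where "a i = (if i = i0 then - (\<Sum>i\<in>I'. a' i * f i N) / f i0 N else a' i)" for i
    have key: "(\<Sum>i\<in>I. a i * f i l) = (\<Sum>i\<in>I'. a' i * g i l)" for l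
    proof -
      have "(\<Sum>i\<in>I. a i * f i l) = a i0 * f i0 l + (\<Sum>i\<in>I'. a i * f i l)"
        using Suc.prems i0 unfolding I'_def by (simp add: sum.remove)
      also have "(\<Sum>i\<in>I'. a i * f i l) = (\<Sum>i\<in>I'. a' i * f i l)"
        by (intro sum.cong) (auto simp: a_def I'_def)
      also have "a i0 * f i0 l = - (\<Sum>i\<in>I'. a' i * f i N / f i0 N * f i0 l)"
        by (simp add: a_def sum_divide_distrib sum_distrib_right sum_negf)
      also have "- (\<Sum>i\<in>I'. a' i * f i N / f i0 N * f i0 l) + (\<Sum>i\<in>I'. a' i * f i l) = (\<Sum>i\<in>I'. a' i * g i l)"
        by (simp add: g_def algebra_simps sum_subtractf)
      finally show ?thesis .
    qed
    have "\<forall>l<Suc N. (\<Sum>i\<in>I. a i * f i l) = 0"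
    proof (intro allI impI)
      fix l assume "l < Suc N"
      then consider "l < N" | "l = N" by linarith
      then show "(\<Sum>i\<in>I. a i * f i l) = 0"
      proof cases
        case 1 then show ?thesis using key a' by simp
      next
        case 2 then show ?thesis using key i0 by (simp add: g_def)
      qed
    qed
    moreover have "\<exists>i\<in>I. a i \<noteq> 0" using a'(1) by (auto simp: a_def I'_def)
    ultimately show ?thesis by blast
  qed
qed

lemma indep_bound:
  fixes S :: "('c \<Rightarrow> 'a::field) set"
  assumes S: "\<And>v. v \<in> S \<Longrightarrow> \<exists>c. v = (\<lambda>x. \<Sum>l<N. c l * b l x)"
    and I: "finite I" "alg_indep_on S I"
  shows "card I \<le> N"
proof (rule ccontr)
  assume "\<not> card I \<le> N"
  then have "N < card I" by simp
  then obtain a where a: "\<exists>i\<in>I. a i \<noteq> 0" "\<forall>l<N. (\<Sum>i\<in>I. a i * b l i) = 0"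
    using lin_dep[OF I(1), of N "\<lambda>i l. b l i"] by blast
  define P where "P v = (\<Sum>i\<in>I. a i * v i)" for v :: "'c \<Rightarrow> 'a"
  have poly: "polyfun_in I P" unfolding P_def[abs_def] by (rule polyfun_lin) (use I in auto)
  have "P v = 0" if vS: "v \<in> S" for v
  proof -
    obtain c where c: "v = (\<lambda>x. \<Sum>l<N. c l * b l x)" using S[OF vS] by blast
    have "P v = (\<Sum>i\<in>I. \<Sum>l<N. a i * (c l * b l i))" by (simp add: P_def c sum_distrib_left)
    also have "\<dots> = (\<Sum>l<N. \<Sum>i\<in>I. c l * (a i * b l i))"
      by (subst sum.swap) (simp add: mult_ac)
    also have "\<dots> = (\<Sum>l<N. c l * (\<Sum>i\<in>I. a i * b l i))" by (simp add: sum_distrib_left)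
    also have "\<dots> = 0" using a(2) by simp
    finally show ?thesis .
  qed
  then have all: "\<forall>v. P v = 0" using I(2) poly unfolding alg_indep_on_def by blast
  obtain i0 where i0: "i0 \<in> I" "a i0 \<noteq> 0" using a(1) by blast
  have "P (\<lambda>x. if x = i0 then 1 else 0) = a i0" using i0 I(1) by (simp add: P_def mult.commute[of "a _"] if_distrib cong: if_cong)
  then show False using all i0 by simp
qed

lemma alg_dim_eqI:
  assumes "finite I0" "card I0 = N" "alg_indep_on S I0"
    and "\<And>I. finite I \<Longrightarrow> alg_indep_on S I \<Longrightarrow> card I \<le> N"
  shows "alg_dim S = N"
  unfolding alg_dim_def
  by (rule Greatest_equality) (use assms in auto)




lemma exists_fiber:
  fixes \<alpha> :: "'a::field_char_0"
  assumes M: "M \<in> Fspace r (d + r)" and p: "degree p \<le> d" "poly p \<alpha> \<noteq> 0"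
  shows "\<exists>L\<in>NOp \<alpha> r d. Fmat \<alpha> r L (d + r) = M \<and> L r = p"
proof -
  have Mid: "\<And>i j. i < r \<Longrightarrow> j < r \<Longrightarrow> M i j = (if i = j then 1 else 0)"
    using M by (simp add: Fspace_def)
  define c where "c k = coeff (p \<circ>\<^sub>p [:\<alpha>, 1:]) k" for k
  have degc: "degree (p \<circ>\<^sub>p [:\<alpha>, 1:]) \<le> d" using p by (simp add: degree_pcompose)
  have c0: "\<And>k. d < k \<Longrightarrow> c k = 0" using degc by (simp add: c_def coeff_eq_0)
  obtain w where w: "satw r d M w" "\<forall>k. w r k = c k" using satw_exists[where r=r and d=d and M=M and c=c, OF Mid c0] by blast
  have wr0: "w r 0 \<noteq> 0" using w(2) p(2)
    by (simp add: c_def poly_0_coeff_0[symmetric] poly_pcompose)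
  define L where "L = Lof \<alpha> d w"
  have L: "L \<in> NOp \<alpha> r d" unfolding L_def by (rule Lof_NOp[OF w(1) wr0])
  have "Qw \<alpha> L = w" unfolding L_def by (rule Qw_Lof) (use w(1) in \<open>auto simp: satw_def\<close>)
  then have F: "Fmat \<alpha> r L (d + r) = M" using NOp_satw_iff[OF L M] w(1) by simp
  have "L r = Lof \<alpha> d (Qw \<alpha> (\<lambda>_. p)) r"
    unfolding L_def by (simp add: Lof_def Qw_def w(2) c_def)
  also have "\<dots> = p" using Lof_Qw[of "\<lambda>_. p" d \<alpha>] p(1) by simp
  finally show ?thesis using L F by blast
qed

lemma fiber_span:
  fixes \<alpha> :: "'a::field_char_0"
  assumes M: "M \<in> Fspace r (d + r)"
  obtains b where "\<And>L. L \<in> NOp \<alpha> r d \<Longrightarrow> Fmat \<alpha> r L (d + r) = M \<Longrightarrow>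
      \<exists>c. op_coords L = (\<lambda>x. \<Sum>l<Suc d. c l * b l x)"
proof -
  have Mid: "\<And>i j. i < r \<Longrightarrow> j < r \<Longrightarrow> M i j = (if i = j then 1 else 0)"
    using M by (simp add: Fspace_def)
  obtain \<beta> where \<beta>: "\<And>w. satw r d M w \<Longrightarrow> w = (\<lambda>j k. \<Sum>l\<le>d. w r l * \<beta> l j k)"
    using satw_span[OF Mid] by blast
  define b where "b l = op_coords (Lof \<alpha> d (\<beta> l))" for l
  have "\<exists>c. op_coords L = (\<lambda>x. \<Sum>l<Suc d. c l * b l x)"
    if L: "L \<in> NOp \<alpha> r d" and FM: "Fmat \<alpha> r L (d + r) = M" for L
  proof -
    have sw: "satw r d M (Qw \<alpha> L)" using NOp_satw_iff[OF L M] FM by simp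
    define c where "c l = Qw \<alpha> L r l" for l
    have "L = Lof \<alpha> d (Qw \<alpha> L)" using Lof_Qw[of L d \<alpha>] NOp_degs[OF L] by simp
    also have "\<dots> = Lof \<alpha> d (\<lambda>j k. \<Sum>l\<le>d. c l * \<beta> l j k)"
      using \<beta>[OF sw] unfolding c_def by simp
    finally have Leq: "L j = (\<Sum>l\<le>d. smult (c l) (Lof \<alpha> d (\<beta> l) j))" for j
      using Lof_lincomb[of "{..d}" \<alpha> d c \<beta> j] by simp
    have "op_coords L = (\<lambda>x. \<Sum>l<Suc d. c l * b l x)"
    proof (rule ext, clarify)
      fix j m
      show "op_coords L (j, m) = (\<Sum>l<Suc d. c l * b l (j, m))"
        by (simp add: op_coords_def b_def Leq coeff_sum lessThan_Suc_atMost)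
    qed
    then show ?thesis by blast
  qed
  then show ?thesis using that by blast
qed

lemma fiber_indep:
  fixes \<alpha> :: "'a::field_char_0"
  assumes M: "M \<in> Fspace r (d + r)"
  shows "alg_indep_on (op_coords ` {L\<in>NOp \<alpha> r d. Fmat \<alpha> r L (d + r) = M}) ((\<lambda>k. (r, k)) ` {..d})"
  unfolding alg_indep_on_def
proof (intro allI impI)
  let ?S = "op_coords ` {L\<in>NOp \<alpha> r d. Fmat \<alpha> r L (d + r) = M}"
  let ?I = "(\<lambda>k. (r, k)) ` {..d}"
  fix P v assume P: "polyfun_in ?I P" and van: "\<forall>v\<in>?S. P v = 0"
  define e where "e (x :: nat \<times> nat) = (if x = (r, 0) then 1 else (0::'a))" for x
  obtain p where p: "\<forall>t. P (\<lambda>x. v x + t * e x) = poly p t" using polyfun_line[OF P] by blast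
  define p0 where "p0 = (\<Sum>k\<le>d. monom (v (r, k)) k)"
  have root: "poly p t = 0" if t: "t \<noteq> - poly p0 \<alpha>" for t
  proof -
    define pt where "pt = (\<Sum>k\<le>d. monom (v (r, k) + t * e (r, k)) k)"
    have "poly pt \<alpha> = (\<Sum>k\<le>d. (v (r, k) + t * e (r, k)) * \<alpha> ^ k)"
      by (simp add: pt_def poly_sum poly_monom)
    also have "\<dots> = (\<Sum>k\<le>d. v (r, k) * \<alpha> ^ k) + (\<Sum>k\<le>d. t * e (r, k) * \<alpha> ^ k)"
      by (simp add: algebra_simps sum.distrib)
    also have "(\<Sum>k\<le>d. t * e (r, k) * \<alpha> ^ k) = (\<Sum>k\<le>d. if k = 0 then t else 0)"
      by (intro sum.cong) (auto simp: e_def)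
    also have "(\<Sum>k\<le>d. if k = 0 then t else 0) = t" by simp
    also have "(\<Sum>k\<le>d. v (r, k) * \<alpha> ^ k) = poly p0 \<alpha>"
      by (simp add: p0_def poly_sum poly_monom)
    finally have "poly pt \<alpha> \<noteq> 0" using t by (auto simp: add_eq_0_iff)
    moreover have "degree pt \<le> d" unfolding pt_def by (rule degree_summonom)
    ultimately obtain L where L: "L \<in> NOp \<alpha> r d" "Fmat \<alpha> r L (d + r) = M" "L r = pt"
      using exists_fiber[OF M] by blast
    have "P (op_coords L) = 0" using van L by blast
    moreover have "P (op_coords L) = P (\<lambda>x. v x + t * e x)"
      by (rule polyfun_agree[OF P]) (auto simp: op_coords_def L(3) pt_def coeff_summonom)
    ultimately show ?thesis using p by simp
  qed
  have "p = 0"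
  proof (rule ccontr)
    assume "p \<noteq> 0"
    then have "finite {t. poly p t = 0}" by (rule poly_roots_finite)
    moreover have "UNIV - {- poly p0 \<alpha>} \<subseteq> {t. poly p t = 0}" using root by auto
    ultimately have "finite (UNIV - {- poly p0 \<alpha>} :: 'a set)" by (rule finite_subset[rotated])
    then have "finite (UNIV :: 'a set)" by simp
    then show False using infinite_UNIV_char_0 by blast
  qed
  then show "P v = 0" using p[rule_format, of 0] by simp
qed

theorem lemma20:
  fixes \<alpha> :: "'a::{alg_closed_field, field_char_0}" and r d :: nat
  defines "\<psi> \<equiv> (\<lambda>L. Fmat \<alpha> r L (d + r))"
  shows "(\<forall>L\<in>NOp \<alpha> r d. \<psi> L \<in> Fspace r (d + r))
       \<and> (\<forall>M\<in>Fspace r (d + r). \<exists>L\<in>NOp \<alpha> r d. \<psi> L = M)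
       \<and> (\<exists>n. \<forall>M\<in>Fspace r (d + r).
              alg_dim (op_coords ` {L\<in>NOp \<alpha> r d. \<psi> L = M}) = n)"
proof (intro conjI)
  show "\<forall>L\<in>NOp \<alpha> r d. \<psi> L \<in> Fspace r (d + r)"
    unfolding \<psi>_def using Fmat_in_Fspace[where D="d+r" and r=r and d=d] by auto
  show "\<forall>M\<in>Fspace r (d + r). \<exists>L\<in>NOp \<alpha> r d. \<psi> L = M"
    unfolding \<psi>_def using exists_fiber[where p=1] by fastforce
  show "\<exists>n. \<forall>M\<in>Fspace r (d + r). alg_dim (op_coords ` {L\<in>NOp \<alpha> r d. \<psi> L = M}) = n"
  proof (intro exI ballI)
    fix M :: "nat \<Rightarrow> nat \<Rightarrow> 'a" assume M: "M \<in> Fspace r (d + r)"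
    let ?S = "op_coords ` {L\<in>NOp \<alpha> r d. Fmat \<alpha> r L (d + r) = M}"
    obtain b where b: "\<And>L. L \<in> NOp \<alpha> r d \<Longrightarrow> Fmat \<alpha> r L (d + r) = M \<Longrightarrow>
      \<exists>c. op_coords L = (\<lambda>x. \<Sum>l<Suc d. c l * b l x)"
      using fiber_span[OF M] by blast
    have "alg_dim ?S = Suc d"
    proof (rule alg_dim_eqI)
      show "finite ((\<lambda>k. (r, k)) ` {..d})" by simp
      show "card ((\<lambda>k. (r, k)) ` {..d}) = Suc d" by (simp add: card_image inj_on_def)
      show "alg_indep_on ?S ((\<lambda>k. (r, k)) ` {..d})" by (rule fiber_indep[OF M])
      fix I assume "finite I" "alg_indep_on ?S I"
      then show "card I \<le> Suc d"
        by (intro indep_bound[where b=b]) (use b in auto)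
    qed
    then show "alg_dim (op_coords ` {L\<in>NOp \<alpha> r d. \<psi> L = M}) = Suc d" unfolding \<psi>_def .
  qed
qed


end
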